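(* Let $n \leq 9$ and let $G$ be a connected $n$-vertex graph with maximum degree at most $3$ that is not isomorphic to any of $C_4$, $C_4'$, $K_4$. Then $\iota(G, C_4) \leq 1$.
   Context: All graphs are finite and simple. For $D \subseteq V(G)$, $N[D]$ is the closed neighbourhood of $D$ and $G - N[D]$ the subgraph induced by $V(G)\setminus N[D]$. A set $D \subseteq V(G)$ is a $C_4$-isolating set of $G$ if $G - N[D]$ contains no subgraph isomorphic to the $4$-cycle $C_4$; $\iota(G, C_4)$ is the minimum size of such a set. $C_4'$ is the diamond graph on $\{1,2,3,4\}$ with edges $12,23,34,41,13$. *)

theory Defs
  imports Main
begin

definition simple_graph :: "'a set \<Rightarrow> ('a \<Rightarrow> 'a \<Rightarrow> bool) \<Rightarrow> bool" where
  "simple_graph V E \<longleftrightarrow> finite V \<and> (\<forall>x y. E x y \<longrightarrow> x \<in> V \<and> y \<in> V)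
     \<and> (\<forall>x y. E x y \<longrightarrow> E y x) \<and> (\<forall>x. \<not> E x x)"

definition connected_graph :: "'a set \<Rightarrow> ('a \<Rightarrow> 'a \<Rightarrow> bool) \<Rightarrow> bool" where
  "connected_graph V E \<longleftrightarrow> (\<forall>x\<in>V. \<forall>y\<in>V. E\<^sup>*\<^sup>* x y)"

definition degree :: "('a \<Rightarrow> 'a \<Rightarrow> bool) \<Rightarrow> 'a \<Rightarrow> nat" where
  "degree E v = card {u. E v u}"

definition max_degree_le :: "'a set \<Rightarrow> ('a \<Rightarrow> 'a \<Rightarrow> bool) \<Rightarrow> nat \<Rightarrow> bool" where
  "max_degree_le V E k \<longleftrightarrow> (\<forall>v\<in>V. degree E v \<le> k)"

definition graph_iso :: "'a set \<Rightarrow> ('a \<Rightarrow> 'a \<Rightarrow> bool) \<Rightarrow> 'b set \<Rightarrow> ('b \<Rightarrow> 'b \<Rightarrow> bool) \<Rightarrow> bool" where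
  "graph_iso V E W F \<longleftrightarrow> (\<exists>f. bij_betw f V W \<and> (\<forall>x\<in>V. \<forall>y\<in>V. E x y \<longleftrightarrow> F (f x) (f y)))"

definition C4_edges :: "nat \<Rightarrow> nat \<Rightarrow> bool" where
  "C4_edges x y \<longleftrightarrow> {x, y} \<in> {{1,2},{2,3},{3,4},{4,1}}"

definition diamond_edges :: "nat \<Rightarrow> nat \<Rightarrow> bool" where
  "diamond_edges x y \<longleftrightarrow> {x, y} \<in> {{1,2},{2,3},{3,4},{4,1},{1,3}}"

definition K4_edges :: "nat \<Rightarrow> nat \<Rightarrow> bool" where
  "K4_edges x y \<longleftrightarrow> x \<in> {1..4} \<and> y \<in> {1..4} \<and> x \<noteq> y"

definition closed_nbhd :: "'a set \<Rightarrow> ('a \<Rightarrow> 'a \<Rightarrow> bool) \<Rightarrow> 'a set \<Rightarrow> 'a set" where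
  "closed_nbhd V E D = D \<union> {v \<in> V. \<exists>d\<in>D. E d v}"

definition contains_C4 :: "'a set \<Rightarrow> ('a \<Rightarrow> 'a \<Rightarrow> bool) \<Rightarrow> bool" where
  "contains_C4 S E \<longleftrightarrow> (\<exists>a\<in>S. \<exists>b\<in>S. \<exists>c\<in>S. \<exists>d\<in>S. distinct [a,b,c,d]
      \<and> E a b \<and> E b c \<and> E c d \<and> E d a)"

definition C4_isolating :: "'a set \<Rightarrow> ('a \<Rightarrow> 'a \<Rightarrow> bool) \<Rightarrow> 'a set \<Rightarrow> bool" where
  "C4_isolating V E D \<longleftrightarrow> D \<subseteq> V \<and> \<not> contains_C4 (V - closed_nbhd V E D) E"

definition iota_C4 :: "'a set \<Rightarrow> ('a \<Rightarrow> 'a \<Rightarrow> bool) \<Rightarrow> nat" where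
  "iota_C4 V E = (LEAST k. \<exists>D. C4_isolating V E D \<and> card D = k)"

end

theory Submission
  imports Defs
begin

definition cyc :: "('a \<Rightarrow> 'a \<Rightarrow> bool) \<Rightarrow> 'a \<Rightarrow> 'a \<Rightarrow> 'a \<Rightarrow> 'a \<Rightarrow> bool" where
  "cyc E a b c d \<longleftrightarrow> distinct [a,b,c,d] \<and> E a b \<and> E b c \<and> E c d \<and> E d a"

lemma contains_C4_cyc: "contains_C4 S E \<longleftrightarrow> (\<exists>a b c d. cyc E a b c d \<and> {a,b,c,d} \<subseteq> S)"
  unfolding contains_C4_def cyc_def by auto

lemma cyc_rot: "cyc E a b c d \<Longrightarrow> cyc E b c d a"
  unfolding cyc_def by auto

lemma deg4:
  assumes "simple_graph V E" "max_degree_le V E 3" "w \<in> V" "distinct [a,b,c,d]"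
    "E w a" "E w b" "E w c" "E w d"
  shows False
proof -
  have fin: "finite {u. E w u}"
    using assms(1) unfolding simple_graph_def by (metis (mono_tags) mem_Collect_eq rev_finite_subset subsetI)
  have "{a,b,c,d} \<subseteq> {u. E w u}" using assms by auto
  then have "card {a,b,c,d} \<le> card {u. E w u}" using fin by (rule card_mono[rotated])
  moreover have "card {a,b,c,d} = 4" using assms(4) by simp
  moreover have "card {u. E w u} \<le> 3" using assms(2,3) unfolding max_degree_le_def degree_def by auto
  ultimately show False by simp
qed

lemma cyc_nbrs:
  assumes "cyc E a b c d" "\<And>x y. E x y \<Longrightarrow> E y x" "x \<in> {a,b,c,d}"
  shows "\<exists>y\<in>{a,b,c,d}. \<exists>z\<in>{a,b,c,d}. y \<noteq> z \<and> E x y \<and> E x z \<and> y \<noteq> x \<and> z \<noteq> x"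
  using assms unfolding cyc_def by (metis distinct_length_2_or_more insert_iff empty_iff)

lemma disj_core:
  assumes sg: "simple_graph V E" and md: "max_degree_le V E 3"
    and Q: "cyc E a b c d" "{a,b,c,d} \<subseteq> V"
    and S: "cyc E s1 s2 s3 s4" "{s1,s2,s3,s4} \<subseteq> V - closed_nbhd V E {a}"
  shows "{s1,s2,s3,s4} \<inter> {a,b,c,d} = {}"
proof (rule ccontr)
  have sym: "\<And>x y. E x y \<Longrightarrow> E y x" using sg unfolding simple_graph_def by blast
  have Na: "{a,b,d} \<subseteq> closed_nbhd V E {a}" using Q sym unfolding closed_nbhd_def cyc_def by auto
  assume "{s1,s2,s3,s4} \<inter> {a,b,c,d} \<noteq> {}"
  then obtain x where x: "x \<in> {s1,s2,s3,s4}" "x \<in> {a,b,c,d}" by blast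
  with S Na have xc: "x = c" by auto
  from cyc_nbrs[OF S(1) sym x(1)] obtain y z where
    yz: "y \<in> {s1,s2,s3,s4}" "z \<in> {s1,s2,s3,s4}" "y \<noteq> z" "E x y" "E x z" by blast
  have "y \<notin> {b,d}" "z \<notin> {b,d}" using yz S Na by auto
  moreover have "E c b" "E c d" "b \<noteq> d" "c \<in> V" using Q sym unfolding cyc_def by auto
  ultimately show False using deg4[OF sg md, of c b d y z] yz xc by auto
qed

lemma disj:
  assumes sg: "simple_graph V E" and md: "max_degree_le V E 3"
    and Q: "cyc E a b c d" "{a,b,c,d} \<subseteq> V" and x: "x \<in> {a,b,c,d}"
    and S: "cyc E s1 s2 s3 s4" "{s1,s2,s3,s4} \<subseteq> V - closed_nbhd V E {x}"
  shows "{s1,s2,s3,s4} \<inter> {a,b,c,d} = {}"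
proof -
  have r1: "cyc E b c d a" "cyc E c d a b" "cyc E d a b c" using Q(1) cyc_rot by metis+
  from x show ?thesis
  proof (elim insertE)
    assume "x = a" then show ?thesis using disj_core[OF sg md Q(1,2) S(1)] S(2) by simp
  next
    assume "x = b" then show ?thesis using disj_core[OF sg md r1(1) _ S(1)] S(2) Q(2)
      by (simp add: insert_commute)
  next
    assume "x = c" then show ?thesis using disj_core[OF sg md r1(2) _ S(1)] S(2) Q(2)
      by (simp add: insert_commute)
  next
    assume "x = d" then show ?thesis using disj_core[OF sg md r1(3) _ S(1)] S(2) Q(2)
      by (simp add: insert_commute)
  qed simp
qed

lemma pig:
  assumes "cyc E s1 s2 s3 s4" "{s1,s2,s3,s4} \<subseteq> A \<union> T" "finite A" "card A \<le> 3"
    "finite T" "card T \<le> 1" "\<And>x y. E x y \<Longrightarrow> E y x"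
  shows "\<exists>w\<in>T. \<exists>u1 u2. u1 \<noteq> u2 \<and> u1 \<in> A \<and> u2 \<in> A \<and> E w u1 \<and> E w u2"
proof -
  have "\<not> {s1,s2,s3,s4} \<subseteq> A"
  proof
    assume "{s1,s2,s3,s4} \<subseteq> A"
    then have "card {s1,s2,s3,s4} \<le> card A" using assms(3) by (rule card_mono[rotated])
    moreover have "card {s1,s2,s3,s4} = 4" using assms(1) unfolding cyc_def by simp
    ultimately show False using assms(4) by simp
  qed
  then obtain w where w: "w \<in> {s1,s2,s3,s4}" "w \<in> T" using assms(2) by blast
  have T1: "\<And>t. t \<in> T \<Longrightarrow> t = w" using w assms(5,6)
    using card_le_Suc0_iff_eq[of T] by auto
  from cyc_nbrs[OF assms(1) assms(7) w(1)] obtain y z where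
    yz: "y \<in> {s1,s2,s3,s4}" "z \<in> {s1,s2,s3,s4}" "y \<noteq> z" "E w y" "E w z" "y \<noteq> w" "z \<noteq> w" by blast
  have "y \<in> A" "z \<in> A" using yz assms(2) T1 by blast+
  then show ?thesis using yz w by blast
qed

lemma split_parts:
  assumes "cyc E s1 s2 s3 s4" "{s1,s2,s3,s4} \<subseteq> A \<union> B" "finite A" "card A \<le> 3"
    "finite B" "card B \<le> 3" "\<And>x y. x \<in> A \<Longrightarrow> y \<in> B \<Longrightarrow> \<not> E x y \<and> \<not> E y x"
  shows False
proof -
  have "{s1,s2,s3,s4} \<subseteq> A \<or> {s1,s2,s3,s4} \<subseteq> B"
    using assms(1,2,7) unfolding cyc_def by (cases "s1 \<in> A") blast+
  then show False
  proof
    assume "{s1,s2,s3,s4} \<subseteq> A"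
    then have "card {s1,s2,s3,s4} \<le> card A" using assms(3) by (rule card_mono[rotated])
    moreover have "card {s1,s2,s3,s4} = 4" using assms(1) unfolding cyc_def by simp
    ultimately show False using assms(4) by simp
  next
    assume "{s1,s2,s3,s4} \<subseteq> B"
    then have "card {s1,s2,s3,s4} \<le> card B" using assms(5) by (rule card_mono[rotated])
    moreover have "card {s1,s2,s3,s4} = 4" using assms(1) unfolding cyc_def by simp
    ultimately show False using assms(6) by simp
  qed
qed

theorem lemma4:
  fixes V :: "'a set" and E :: "'a \<Rightarrow> 'a \<Rightarrow> bool"
  assumes "simple_graph V E"
    and "card V \<le> 9"
    and "connected_graph V E"
    and "max_degree_le V E 3"
    and "\<not> graph_iso V E {1..4::nat} C4_edges"
    and "\<not> graph_iso V E {1..4::nat} diamond_edges"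
    and "\<not> graph_iso V E {1..4::nat} K4_edges"
  shows "iota_C4 V E \<le> 1"
proof -
  note sg = assms(1) and md = assms(4)
  have fin: "finite V" using sg unfolding simple_graph_def by blast
  have inV: "\<And>x y. E x y \<Longrightarrow> x \<in> V \<and> y \<in> V" using sg unfolding simple_graph_def by blast
  have sym: "\<And>x y. E x y \<Longrightarrow> E y x" using sg unfolding simple_graph_def by blast
  have irr: "\<And>x. \<not> E x x" using sg unfolding simple_graph_def by blast
  have key: "\<exists>D. C4_isolating V E D \<and> card D \<le> 1"
  proof (rule ccontr)
    assume H: "\<not> (\<exists>D. C4_isolating V E D \<and> card D \<le> 1)"
    have bad: "\<exists>s1 s2 s3 s4. cyc E s1 s2 s3 s4 \<and> {s1,s2,s3,s4} \<subseteq> V - closed_nbhd V E {v}"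
      if "v \<in> V" for v
    proof -
      have "\<not> C4_isolating V E {v}" using H by force
      then have "contains_C4 (V - closed_nbhd V E {v}) E" using that unfolding C4_isolating_def by simp
      then show ?thesis unfolding contains_C4_cyc .
    qed
    have "\<not> C4_isolating V E {}" using H by force
    then have "contains_C4 V E" unfolding C4_isolating_def
      by (simp add: closed_nbhd_def)
    then obtain q1 q2 q3 q4 where Q: "cyc E q1 q2 q3 q4" "{q1,q2,q3,q4} \<subseteq> V"
      unfolding contains_C4_cyc by blast
    have q1V: "q1 \<in> V" using Q(2) by simp
    from bad[OF q1V] obtain r1 r2 r3 r4 where R: "cyc E r1 r2 r3 r4" "{r1,r2,r3,r4} \<subseteq> V - closed_nbhd V E {q1}"
      by blast
    have QR: "{r1,r2,r3,r4} \<inter> {q1,q2,q3,q4} = {}" using disj[OF sg md Q _ R] by simp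
    define Qs where "Qs = {q1,q2,q3,q4}"
    define Rs where "Rs = {r1,r2,r3,r4}"
    define T where "T = V - Qs - Rs"
    have cQ: "card Qs = 4" using Q(1) unfolding Qs_def cyc_def by simp
    have cR: "card Rs = 4" using R(1) unfolding Rs_def cyc_def by simp
    have RV: "Rs \<subseteq> V" using R(2) unfolding Rs_def by blast
    have QV: "Qs \<subseteq> V" using Q(2) unfolding Qs_def by blast
    have QRd: "Qs \<inter> Rs = {}" using QR unfolding Qs_def Rs_def by blast
    have finQ: "finite Qs" "finite Rs" unfolding Qs_def Rs_def by auto
    have finT: "finite T" using fin unfolding T_def by simp
    have VV: "V = (Qs \<union> Rs) \<union> T" using QV RV unfolding T_def by blast
    have "card V = card (Qs \<union> Rs) + card T"
      apply (subst VV)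
      apply (rule card_Un_disjoint)
      using finT finQ unfolding T_def by auto
    moreover have "card (Qs \<union> Rs) = 8" using card_Un_disjoint[OF finQ QRd] cQ cR
      by simp
    ultimately have cT: "card T \<le> 1" using assms(2) by simp
    have T1: "\<And>t t'. t \<in> T \<Longrightarrow> t' \<in> T \<Longrightarrow> t = t'" using cT finT card_le_Suc0_iff_eq[of T] by auto
    have cycQ: "cyc E q1 q2 q3 q4" and cycR: "cyc E r1 r2 r3 r4" using Q R by auto
    show False
    proof (cases "\<exists>x\<in>Qs. \<exists>y\<in>Rs. E x y")
      case True
      then obtain x y where xy: "x \<in> Qs" "y \<in> Rs" "E x y" by blast
      have xV: "x \<in> V" using xy QV by blast
      from bad[OF xV] obtain s1 s2 s3 s4 where S: "cyc E s1 s2 s3 s4" "{s1,s2,s3,s4} \<subseteq> V - closed_nbhd V E {x}"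
        by blast
      have "{s1,s2,s3,s4} \<inter> Qs = {}" using disj[OF sg md Q _ S] xy(1) unfolding Qs_def by simp
      moreover have "y \<in> closed_nbhd V E {x}" using xy RV unfolding closed_nbhd_def by auto
      ultimately have "{s1,s2,s3,s4} \<subseteq> (Rs - {y}) \<union> T" using S(2) unfolding T_def by blast
      moreover have "card (Rs - {y}) \<le> 3" using cR xy(2) finQ by simp
      ultimately obtain w u1 u2 where W: "w \<in> T" "u1 \<noteq> u2" "u1 \<in> Rs" "u2 \<in> Rs" "E w u1" "E w u2"
        using pig[OF S(1) _ _ _ finT cT sym, of "Rs - {y}"] finQ by blast
      have yV: "y \<in> V" using xy RV by blast
      from bad[OF yV] obtain t1 t2 t3 t4 where S': "cyc E t1 t2 t3 t4" "{t1,t2,t3,t4} \<subseteq> V - closed_nbhd V E {y}"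
        by blast
      have "{t1,t2,t3,t4} \<inter> Rs = {}" using disj[OF sg md R(1) _ _ S'] RV xy(2) unfolding Rs_def by simp
      moreover have "x \<in> closed_nbhd V E {y}" using xy QV sym unfolding closed_nbhd_def by auto
      ultimately have "{t1,t2,t3,t4} \<subseteq> (Qs - {x}) \<union> T" using S'(2) unfolding T_def by blast
      moreover have "card (Qs - {x}) \<le> 3" using cQ xy(1) finQ by simp
      ultimately obtain w' u3 u4 where W': "w' \<in> T" "u3 \<noteq> u4" "u3 \<in> Qs" "u4 \<in> Qs" "E w' u3" "E w' u4"
        using pig[OF S'(1) _ _ _ finT cT sym, of "Qs - {x}"] finQ by blast
      have "w' = w" using T1 W W' by blast
      have dd: "distinct [u1,u2,u3,u4]" using W W' QRd by auto
      have wV: "w \<in> V" using W(1) unfolding T_def by simp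
      show False using deg4[OF sg md wV dd] W W' \<open>w' = w\<close> by simp
    next
      case noQR: False
      show False
      proof (cases "\<exists>w\<in>T. \<exists>q\<in>Qs. \<exists>r\<in>Rs. E w q \<and> E w r")
        case True
        then obtain w q r where W: "w \<in> T" "q \<in> Qs" "r \<in> Rs" "E w q" "E w r" by blast
        have wV: "w \<in> V" using W T_def by auto
        from bad[OF wV] obtain s1 s2 s3 s4 where S: "cyc E s1 s2 s3 s4" "{s1,s2,s3,s4} \<subseteq> V - closed_nbhd V E {w}"
          by blast
        have cn: "w \<in> closed_nbhd V E {w}" "q \<in> closed_nbhd V E {w}" "r \<in> closed_nbhd V E {w}"
          using W QV RV unfolding closed_nbhd_def by auto
        have Tw: "T \<subseteq> {w}" using T1 W(1) by blast
        have "{s1,s2,s3,s4} \<subseteq> V - {w,q,r}" using S(2) cn by blast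
        also have "\<dots> \<subseteq> (Qs - {q}) \<union> (Rs - {r})" using VV Tw by blast
        finally have Ssub: "{s1,s2,s3,s4} \<subseteq> (Qs - {q}) \<union> (Rs - {r})" .
        have noE: "\<not> E x y \<and> \<not> E y x" if "x \<in> Qs - {q}" "y \<in> Rs - {r}" for x y
          using noQR sym that by blast
        moreover have "card (Qs - {q}) \<le> 3" "card (Rs - {r}) \<le> 3" using cQ cR W finQ by simp_all
        ultimately show False
          using split_parts[OF S(1) Ssub _ _ _ _ noE] finQ by simp
      next
        case False
        define X where "X = Qs \<union> {t\<in>T. \<exists>q\<in>Qs. E q t}"
        have clos: "y \<in> X" if "x \<in> X" "E x y" for x y
        proof -
          have yV: "y \<in> V" using inV that by blast
          show ?thesis
          proof (cases "x \<in> Qs")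
            case True
            then have "y \<notin> Rs" using noQR that by blast
            then show ?thesis using yV True that unfolding X_def T_def by blast
          next
            case xn: False
            then have xT: "x \<in> T" and xq: "\<exists>q\<in>Qs. E q x" using that unfolding X_def by auto
            have "y \<notin> Rs" using False xT xq sym that by blast
            moreover have "y \<notin> T" using T1 xT irr that by blast
            ultimately show ?thesis using yV unfolding X_def T_def by blast
          qed
        qed
        have "E\<^sup>*\<^sup>* q1 r1" using assms(3) Q(2) R(2) unfolding connected_graph_def by blast
        then have "r1 \<in> X"
        proof (induction rule: rtranclp_induct)
          case base then show ?case unfolding X_def Qs_def by simp
        next
          case (step y z) then show ?case using clos by blast
        qed
        moreover have "r1 \<in> Rs" unfolding Rs_def by simp
        ultimately show False using QRd unfolding X_def T_def by blast
      qed
    qed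
  qed
  then obtain D where D: "C4_isolating V E D" "card D \<le> 1" by blast
  have "iota_C4 V E \<le> card D" unfolding iota_C4_def by (rule Least_le) (use D in blast)
  then show ?thesis using D by simp
qed

end
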